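(* Let $\gamma>0$. The set $\mathcal{G}_\gamma$ has two path-connected components, namely $\mathcal{G}_\gamma^+=\{(X,Y,\hat A,\hat B,\hat C,\hat D,\Pi,\Xi)\in\mathcal{G}_\gamma:\det\Pi>0\}$ and $\mathcal{G}_\gamma^-=\{(X,Y,\hat A,\hat B,\hat C,\hat D,\Pi,\Xi)\in\mathcal{G}_\gamma:\det\Pi<0\}$.
   Context: Consider real matrices $A\in\mathbb{R}^{n_x\times n_x}$, $B_1\in\mathbb{R}^{n_x\times n_w}$, $B_2\in\mathbb{R}^{n_x\times n_u}$, $C_1\in\mathbb{R}^{n_z\times n_x}$, $C_2\in\mathbb{R}^{n_y\times n_x}$, $D_{11}\in\mathbb{R}^{n_z\times n_w}$, $D_{12}\in\mathbb{R}^{n_z\times n_u}$, $D_{21}\in\mathbb{R}^{n_y\times n_w}$ (the data of the plant $\dot x=Ax+B_1w+B_2u$, $z=C_1x+D_{11}w+D_{12}u$, $y=C_2x+D_{21}w$), with $(A,B_2)$ stabilizable and $(C_2,A)$ detectable. For $X,Y\in\mathbb{S}^{n_x}$, $\hat A\in\mathbb{R}^{n_x\times n_x}$, $\hat B\in\mathbb{R}^{n_x\times n_y}$, $\hat C\in\mathbb{R}^{n_u\times n_x}$, $\hat D\in\mathbb{R}^{n_u\times n_y}$, let $M_\gamma$ be the symmetric $4\times4$ block matrix with $M_{11}=AX+XA^T+B_2\hat C+(B_2\hat C)^T$, $M_{12}=\hat A^T+A+B_2\hat DC_2$, $M_{13}=B_1+B_2\hat DD_{21}$, $M_{14}=(C_1X+D_{12}\hat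 C)^T$, $M_{22}=A^TY+YA+\hat BC_2+(\hat BC_2)^T$, $M_{23}=YB_1+\hat BD_{21}$, $M_{24}=(C_1+D_{12}\hat DC_2)^T$, $M_{33}=-\gamma I$, $M_{34}=(D_{11}+D_{12}\hat DD_{21})^T$, $M_{44}=-\gamma I$. $\mathcal{F}_\gamma$ is the set of $(X,Y,\hat A,\hat B,\hat C,\hat D)$ with $\begin{bmatrix}X& I\\ I& Y\end{bmatrix}\succ0$ and $M_\gamma\prec0$; $\mathcal{G}_\gamma$ is the set of $(X,Y,\hat A,\hat B,\hat C,\hat D,\Pi,\Xi)$ with $(X,\dots,\hat D)\in\mathcal{F}_\gamma$, $\Pi,\Xi\in\mathbb{R}^{n_x\times n_x}$ and $\Xi\Pi=I-YX$. *)

theory Defs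
  imports "HOL-Analysis.Analysis"
begin

text \<open>Matrices: real^'c^'r is an r-by-c real matrix (rows indexed by 'r).
  Dimensions: 'x = n_x, 'w = n_w, 'u = n_u, 'z = n_z, 'y = n_y.\<close>

definition symmetric_mat :: "real^'n^'n \<Rightarrow> bool" where
  "symmetric_mat M \<longleftrightarrow> transpose M = M"

definition pos_def :: "real^'n^'n \<Rightarrow> bool" where
  "pos_def M \<longleftrightarrow> symmetric_mat M \<and> (\<forall>v. v \<noteq> 0 \<longrightarrow> v \<bullet> (M *v v) > 0)"

definition neg_def :: "real^'n^'n \<Rightarrow> bool" where
  "neg_def M \<longleftrightarrow> pos_def (- M)"

definition blk2 :: "real^'c^'a \<Rightarrow> real^'d^'a \<Rightarrow> real^'c^'b \<Rightarrow> real^'d^'b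
    \<Rightarrow> real^('c + 'd)^('a + 'b)" where
  "blk2 P Q R S = (\<chi> i j. case i of
       Inl a \<Rightarrow> (case j of Inl b \<Rightarrow> P$a$b | Inr b \<Rightarrow> Q$a$b)
     | Inr a \<Rightarrow> (case j of Inl b \<Rightarrow> R$a$b | Inr b \<Rightarrow> S$a$b))"

definition hurwitz :: "real^'n^'n \<Rightarrow> bool" where
  "hurwitz M \<longleftrightarrow> (\<forall>(lam::complex) (v::complex^'n). v \<noteq> 0 \<and>
      (\<chi> i. \<Sum>j\<in>UNIV. complex_of_real (M$i$j) * v$j) = lam *s v \<longrightarrow> Re lam < 0)"

definition stabilizable :: "real^'n^'n \<Rightarrow> real^'m^'n \<Rightarrow> bool" where
  "stabilizable A B \<longleftrightarrow> (\<exists>K :: real^'n^'m. hurwitz (A + B ** K))"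

definition detectable :: "real^'n^'p \<Rightarrow> real^'n^'n \<Rightarrow> bool" where
  "detectable C A \<longleftrightarrow> (\<exists>L :: real^'p^'n. hurwitz (A + L ** C))"

definition Mgam ::
  "real^'x^'x \<Rightarrow> real^'w^'x \<Rightarrow> real^'u^'x \<Rightarrow> real^'x^'z \<Rightarrow> real^'x^'y
   \<Rightarrow> real^'w^'z \<Rightarrow> real^'u^'z \<Rightarrow> real^'w^'y \<Rightarrow> real
   \<Rightarrow> real^'x^'x \<Rightarrow> real^'x^'x \<Rightarrow> real^'x^'x \<Rightarrow> real^'y^'x \<Rightarrow> real^'x^'u \<Rightarrow> real^'y^'u
   \<Rightarrow> real^(('x + 'x) + ('w + 'z))^(('x + 'x) + ('w + 'z))" where
  "Mgam A B1 B2 C1 C2 D11 D12 D21 \<gamma> X Y Ah Bh Ch Dh =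
    (let M11 = A ** X + X ** transpose A + B2 ** Ch + transpose (B2 ** Ch);
         M12 = transpose Ah + A + B2 ** Dh ** C2;
         M13 = B1 + B2 ** Dh ** D21;
         M14 = transpose (C1 ** X + D12 ** Ch);
         M22 = transpose A ** Y + Y ** A + Bh ** C2 + transpose (Bh ** C2);
         M23 = Y ** B1 + Bh ** D21;
         M24 = transpose (C1 + D12 ** Dh ** C2);
         M33 = mat (- \<gamma>);
         M34 = transpose (D11 + D12 ** Dh ** D21);
         M44 = mat (- \<gamma>)
     in blk2 (blk2 M11 M12 (transpose M12) M22)
             (blk2 M13 M14 M23 M24)
             (blk2 (transpose M13) (transpose M23) (transpose M14) (transpose M24))
             (blk2 M33 M34 (transpose M34) M44))"

definition Fset ::
  "real^'x^'x \<Rightarrow> real^'w^'x \<Rightarrow> real^'u^'x \<Rightarrow> real^'x^'z \<Rightarrow> real^'x^'y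
   \<Rightarrow> real^'w^'z \<Rightarrow> real^'u^'z \<Rightarrow> real^'w^'y \<Rightarrow> real
   \<Rightarrow> ((real^'x^'x) \<times> (real^'x^'x) \<times> (real^'x^'x) \<times> (real^'y^'x) \<times> (real^'x^'u) \<times> (real^'y^'u)) set" where
  "Fset A B1 B2 C1 C2 D11 D12 D21 \<gamma> =
    {(X, Y, Ah, Bh, Ch, Dh). symmetric_mat X \<and> symmetric_mat Y \<and>
        pos_def (blk2 X (mat 1) (mat 1) Y) \<and>
        neg_def (Mgam A B1 B2 C1 C2 D11 D12 D21 \<gamma> X Y Ah Bh Ch Dh)}"

definition Gset ::
  "real^'x^'x \<Rightarrow> real^'w^'x \<Rightarrow> real^'u^'x \<Rightarrow> real^'x^'z \<Rightarrow> real^'x^'y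
   \<Rightarrow> real^'w^'z \<Rightarrow> real^'u^'z \<Rightarrow> real^'w^'y \<Rightarrow> real
   \<Rightarrow> ((real^'x^'x) \<times> (real^'x^'x) \<times> (real^'x^'x) \<times> (real^'y^'x) \<times> (real^'x^'u)
        \<times> (real^'y^'u) \<times> (real^'x^'x) \<times> (real^'x^'x)) set" where
  "Gset A B1 B2 C1 C2 D11 D12 D21 \<gamma> =
    {(X, Y, Ah, Bh, Ch, Dh, Pi, Xi).
        (X, Y, Ah, Bh, Ch, Dh) \<in> Fset A B1 B2 C1 C2 D11 D12 D21 \<gamma> \<and>
        Xi ** Pi = mat 1 - Y ** X}"

end

theory Submission
  imports Defs
begin


lemma det_nz_ker:
  fixes M :: "real^'n^'n"
  assumes "\<And>x. M *v x = 0 \<Longrightarrow> x = 0"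
  shows "det M \<noteq> 0"
proof -
  have "inj ((*v) M)"
  proof (rule injI)
    fix a b assume "M *v a = M *v b"
    then have "M *v (a - b) = 0" by (simp add: matrix_vector_mult_diff_distrib)
    then show "a = b" using assms[of "a - b"] by simp
  qed
  then show ?thesis using det_nz_iff_inj[of "(*v) M"]
    by (simp add: matrix_vector_mul_linear matrix_of_matrix_vector_mul)
qed

lemma ker_det_z:
  fixes M :: "real^'n^'n"
  assumes "det M = 0"
  obtains x where "x \<noteq> 0" "M *v x = 0"
proof -
  have "\<not> inj ((*v) M)" using det_nz_iff_inj[of "(*v) M"] assms
    by (simp add: matrix_vector_mul_linear matrix_of_matrix_vector_mul)
  then obtain a b where "a \<noteq> b" "M *v a = M *v b" unfolding inj_def by auto
  then show ?thesis using that[of "a - b"]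
    by (simp add: matrix_vector_mult_diff_distrib)
qed

lemma continuous_on_mmult[continuous_intros]:
  fixes F :: "'a::topological_space \<Rightarrow> real^'m^'n" and G :: "'a \<Rightarrow> real^'p^'m"
  assumes "continuous_on S F" "continuous_on S G"
  shows "continuous_on S (\<lambda>t. F t ** G t)"
  unfolding matrix_matrix_mult_def
  by (intro continuous_intros assms)

lemma continuous_on_det[continuous_intros]:
  fixes F :: "'a::topological_space \<Rightarrow> real^'n^'n"
  assumes "continuous_on S F"
  shows "continuous_on S (\<lambda>t. det (F t))"
  unfolding det_def
  by (intro continuous_intros assms)

lemma sign_pres:
  fixes h :: "real \<Rightarrow> real"
  assumes "continuous_on {0..1} h" "\<And>t. t \<in> {0..1} \<Longrightarrow> h t \<noteq> 0" "h 0 > 0"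
    and "t \<in> {0..1}"
  shows "h t > 0"
proof (rule ccontr)
  assume "\<not> h t > 0"
  then have "h t \<le> 0" by simp
  moreover have "continuous_on {0..t} h"
    apply (rule continuous_on_subset[OF assms(1)]) using assms(4) by auto
  ultimately obtain x where "0 \<le> x" "x \<le> t" "h x = 0"
    using IVT2'[of h t 0 0] assms by auto
  then show False using assms(2)[of x] assms(4) by auto
qed



lemma pc_path:
  fixes g :: "real \<Rightarrow> 'a::topological_space"
  assumes "continuous_on {0..1} g" "g 0 = A" "g 1 = B" "\<And>t. t \<in> {0..1} \<Longrightarrow> g t \<in> S"
  shows "path_component S A B"
  unfolding path_component_def path_def pathstart_def pathfinish_def path_image_def
  apply (rule exI[of _ g]) using assms by auto

lemma pc_mult:
  fixes A A' B B' :: "real^'n^'n"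
  assumes "path_component {M. det M \<noteq> 0} A A'" "path_component {M. det M \<noteq> 0} B B'"
  shows "path_component {M. det M \<noteq> 0} (A ** B) (A' ** B')"
proof -
  obtain g where g: "path g" "path_image g \<subseteq> {M. det M \<noteq> 0}" "pathstart g = A" "pathfinish g = A'"
    using assms(1) unfolding path_component_def by blast
  obtain h where h: "path h" "path_image h \<subseteq> {M. det M \<noteq> 0}" "pathstart h = B" "pathfinish h = B'"
    using assms(2) unfolding path_component_def by blast
  show ?thesis
  proof (rule pc_path[of "\<lambda>t. g t ** h t"])
    show "continuous_on {0..1} (\<lambda>t. g t ** h t)"
      using g(1) h(1) unfolding path_def by (intro continuous_intros)
    fix t :: real assume "t \<in> {0..1}"
    then have "det (g t) \<noteq> 0" "det (h t) \<noteq> 0" using g(2) h(2) unfolding path_image_def by blast+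
    then show "g t ** h t \<in> {M. det M \<noteq> 0}" by (simp add: det_mul)
  qed (use g h in \<open>auto simp: pathstart_def pathfinish_def\<close>)
qed

definition Ed :: "'n \<Rightarrow> real \<Rightarrow> real^'n^'n" where
  "Ed a c = (\<chi> i j. if i = j then (if i = a then c else 1) else 0)"

definition transv :: "'n \<Rightarrow> 'n \<Rightarrow> real \<Rightarrow> real^'n^'n" where
  "transv m n c = (\<chi> i j. if i = m \<and> j = n then c else of_bool (i = j))"

definition swp :: "'n \<Rightarrow> 'n \<Rightarrow> real^'n^'n" where
  "swp m n = (\<chi> i j. mat 1 $ i $ Transposition.transpose m n j)"

lemma det_Ed: "det (Ed a c) = c"
proof -
  have "det (Ed a c) = (\<Prod>i\<in>UNIV. Ed a c $ i $ i)"
    by (rule det_diagonal) (simp add: Ed_def)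
  also have "\<dots> = (\<Prod>i\<in>UNIV. if i = a then c else 1)" by (simp add: Ed_def)
  also have "\<dots> = c" by (simp add: prod.If_cases)
  finally show ?thesis .
qed

lemma Ed_mult_Ed: "Ed a (-1) ** Ed a (-1) = mat 1"
proof -
  have "(Ed a (-1) ** Ed a (-1)) $ i $ j = mat 1 $ i $ j" for i j
  proof -
    have "(Ed a (-1) ** Ed a (-1)) $ i $ j = (\<Sum>k\<in>UNIV. if k = i then (if i = j then (if i = a then -1 else 1) * (if i = a then -1 else 1) else 0) else 0)"
      unfolding matrix_matrix_mult_def Ed_def vec_lambda_beta by (intro sum.cong) auto
    also have "\<dots> = mat 1 $ i $ j" by (simp add: mat_def)
    finally show ?thesis .
  qed
  then show ?thesis by (simp add: vec_eq_iff)
qed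

lemma transv_ker: "m \<noteq> n \<Longrightarrow> transv m n c *v x = 0 \<Longrightarrow> x = 0"
proof -
  assume mn: "m \<noteq> n" and h: "transv m n c *v x = 0"
  have e: "(transv m n c *v x) $ i = x $ i + (if i = m then c * x $ n else 0)" for i
  proof -
    have "(transv m n c *v x) $ i = (\<Sum>j\<in>UNIV. (if j = i then x $ j else 0) + (if j = n then (if i = m then c * x $ n else 0) else 0))"
      unfolding matrix_vector_mult_def transv_def vec_lambda_beta using mn
      by (intro sum.cong) auto
    also have "\<dots> = x $ i + (if i = m then c * x $ n else 0)"
      by (simp only: sum.distrib sum.delta finite UNIV_I if_True)
    finally show ?thesis .
  qed
  have z: "x $ i + (if i = m then c * x $ n else 0) = 0" for i using h e[of i] by simp
  have "x $ n = 0" using z[of n] mn by simp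
  then have "x $ i = 0" for i using z[of i] by (cases "i = m") auto
  then show "x = 0" by (simp add: vec_eq_iff)
qed



lemma swp_mult: "(swp m n *v x) $ i = x $ (Transposition.transpose m n i)"
proof -
  have "(swp m n *v x) $ i = (\<Sum>j\<in>UNIV. if j = Transposition.transpose m n i then x $ j else 0)"
    unfolding swp_def matrix_vector_mult_def mat_def vec_lambda_beta
    by (intro sum.cong) (auto simp: Transposition.transpose_def)
  also have "\<dots> = x $ (Transposition.transpose m n i)" by (simp only: sum.delta finite UNIV_I if_True)
  finally show ?thesis .
qed

lemma Ed_mult: "(Ed a c *v x) $ i = (if i = a then c else 1) * x $ i"
proof -
  have "(Ed a c *v x) $ i = (\<Sum>j\<in>UNIV. if j = i then (if i = a then c else 1) * x $ i else 0)"
    unfolding Ed_def matrix_vector_mult_def vec_lambda_beta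
    by (intro sum.cong) auto
  also have "\<dots> = (if i = a then c else 1) * x $ i" by (simp only: sum.delta finite UNIV_I if_True)
  finally show ?thesis .
qed

lemma swp_Ed:
  fixes m n :: "'n::finite"
  assumes mn: "m \<noteq> n"
  shows "path_component {M::real^'n^'n. det M \<noteq> 0} (swp m n) (Ed m (-1))"
proof (rule pc_path[of "\<lambda>t. (1-t) *\<^sub>R swp m n + t *\<^sub>R Ed m (-1)"])
  show "continuous_on {0..1} (\<lambda>t. (1-t) *\<^sub>R swp m n + t *\<^sub>R Ed m (-1))"
    by (intro continuous_intros)
  fix t :: real assume t: "t \<in> {0..1}"
  have "det ((1-t) *\<^sub>R swp m n + t *\<^sub>R Ed m (-1)) \<noteq> 0"
  proof (rule det_nz_ker)
    fix x assume h: "((1 - t) *\<^sub>R swp m n + t *\<^sub>R Ed m (- 1)) *v x = 0"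
    have e: "(1-t) * x $ (Transposition.transpose m n i) + t * ((if i = m then -1 else 1) * x $ i) = 0" for i
    proof -
      have "(((1 - t) *\<^sub>R swp m n + t *\<^sub>R Ed m (- 1)) *v x) $ i
          = (1-t) * (swp m n *v x) $ i + t * (Ed m (-1) *v x) $ i"
        by (simp only: matrix_vector_mult_add_rdistrib scaleR_matrix_vector_assoc[symmetric]
              vector_add_component vector_scaleR_component real_scaleR_def)
      then show ?thesis using h by (simp only: swp_mult Ed_mult) simp
    qed
    have e1: "(1-t) * x $ n - t * x $ m = 0" using e[of m] by simp
    have e2: "(1-t) * x $ m + t * x $ n = 0" using e[of n] mn by simp
    have "x $ m * ((1-t)^2 + t^2) = 0"
    proof -
      have "x $ m * ((1-t)^2 + t^2) = (1-t) * ((1-t) * x $ m + t * x $ n) - t * ((1-t) * x $ n - t * x $ m)"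
        by (simp add: algebra_simps power2_eq_square)
      then show ?thesis using e1 e2 by simp
    qed
    moreover have "(1-t)^2 + t^2 > 0"
      by (cases "t = 0") (auto intro: add_nonneg_pos)
    ultimately have xm: "x $ m = 0" by (metis mult_eq_0_iff less_irrefl)
    have "x $ n = ((1-t) * x $ n - t * x $ m) + ((1-t) * x $ m + t * x $ n) + t * x $ m - (1-t) * x $ m"
      by (simp add: algebra_simps)
    then have xn: "x $ n = 0" using e1 e2 xm by auto
    show "x = 0"
    proof (rule vec_eq_iff[THEN iffD2], rule allI)
      fix i show "x $ i = 0 $ i"
      proof (cases "i = m \<or> i = n")
        case True then show ?thesis using xm xn by auto
      next
        case False
        then have "Transposition.transpose m n i = i" by (auto simp: Transposition.transpose_def)
        then show ?thesis using e[of i] False by (simp add: algebra_simps)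
      qed
    qed
  qed
  then show "(1-t) *\<^sub>R swp m n + t *\<^sub>R Ed m (-1) \<in> {M. det M \<noteq> 0}" by simp
qed (simp_all)

abbreviation "GLs \<equiv> {M::real^'n^'n. det M \<noteq> 0}"

lemma Ed_Ed:
  fixes i a :: "'n::finite"
  shows "path_component GLs (Ed i (-1)) (Ed a (-1))"
proof (cases "i = a")
  case True
  then show ?thesis using path_component_refl[of "Ed a (-1)" GLs] by (simp add: det_Ed)
next
  case False
  have 1: "path_component GLs (Ed i (-1)) (swp i a)"
    using swp_Ed[OF False] by (rule path_component_sym)
  have 2: "swp i a = swp a i" by (simp add: swp_def transpose_commute)
  have 3: "path_component GLs (swp a i) (Ed a (-1))"
    using False by (intro swp_Ed) auto
  show ?thesis using path_component_trans[OF 1[unfolded 2] 3] .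
qed

definition SK :: "'n set \<Rightarrow> real^'n^'n" where
  "SK K = (\<chi> i j. if i = j then (if i \<in> K then -1 else 1) else 0)"

lemma SK_insert:
  assumes iK: "i \<notin> K"
  shows "SK (insert i K) = SK K ** Ed i (-1)"
proof -
  have "(SK K ** Ed i (-1)) $ p $ q = SK (insert i K) $ p $ q" for p q
  proof -
    have "(SK K ** Ed i (-1)) $ p $ q = (\<Sum>k\<in>UNIV. if k = p then (if p = q then (if p \<in> K then -1 else 1) * (if p = i then -1 else 1) else 0) else 0)"
      unfolding matrix_matrix_mult_def SK_def Ed_def vec_lambda_beta by (intro sum.cong) auto
    also have "\<dots> = SK (insert i K) $ p $ q"
      using iK by (auto simp: SK_def)
    finally show ?thesis .
  qed
  then show ?thesis by (simp add: vec_eq_iff)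
qed

lemma SK_conn:
  fixes a :: "'n::finite"
  shows "path_component GLs (SK K) (mat 1) \<or> path_component GLs (SK K) (Ed a (-1))"
proof -
  have "finite K" by simp
  then show ?thesis
  proof (induction K rule: finite_induct)
    case empty
    have "SK {} = (mat 1 :: real^'n^'n)" by (simp add: SK_def mat_def vec_eq_iff)
    then show ?case by (auto intro!: path_component_refl)
  next
    case (insert i K)
    have E: "path_component GLs (Ed i (-1)) (Ed a (-1))" by (rule Ed_Ed)
    from insert.IH show ?case
    proof
      assume "path_component GLs (SK K) (mat 1)"
      from pc_mult[OF this E] show ?case using insert.hyps by (simp add: SK_insert)
    next
      assume "path_component GLs (SK K) (Ed a (-1))"
      from pc_mult[OF this E] show ?case using insert.hyps by (simp add: SK_insert Ed_mult_Ed)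
    qed
  qed
qed

lemma diag_conn:
  fixes D :: "real^'n^'n" and a :: "'n::finite"
  assumes diag: "\<And>i j. i \<noteq> j \<Longrightarrow> D$i$j = 0" and dz: "det D \<noteq> 0"
  shows "path_component GLs D (mat 1) \<or> path_component GLs D (Ed a (-1))"
proof -
  have dd: "D $ i $ i \<noteq> 0" for i using dz det_diagonal[OF diag] by auto
  define S where "S = SK {i. D $ i $ i < 0}"
  have "path_component GLs D S"
  proof (rule pc_path[of "\<lambda>t. (1-t) *\<^sub>R D + t *\<^sub>R S"])
    show "continuous_on {0..1} (\<lambda>t. (1-t) *\<^sub>R D + t *\<^sub>R S)"
      by (intro continuous_intros)
    fix t :: real assume t: "t \<in> {0..1}"
    let ?M = "(1-t) *\<^sub>R D + t *\<^sub>R S"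
    have md: "\<And>i j. i \<noteq> j \<Longrightarrow> ?M $ i $ j = 0" using diag by (simp add: S_def SK_def)
    have "?M $ i $ i \<noteq> 0" for i
    proof (cases "D $ i $ i < 0")
      case True
      then have "?M $ i $ i < 0" using t
        by (simp add: S_def SK_def) (smt (verit) mult_nonneg_nonpos mult_pos_neg)
      then show ?thesis by simp
    next
      case False
      then have "D $ i $ i > 0" using dd[of i] by simp
      then have "?M $ i $ i > 0" using t False
        by (simp add: S_def SK_def) (smt (verit) mult_nonneg_nonneg mult_pos_pos)
      then show ?thesis by simp
    qed
    then show "?M \<in> GLs" by (simp add: det_diagonal[OF md])
  qed simp_all
  then show ?thesis using SK_conn[of "{i. D $ i $ i < 0}" a] unfolding S_def
    by (meson path_component_trans)
qed

lemma transv_conn: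
  fixes m n :: "'n::finite"
  assumes "m \<noteq> n"
  shows "path_component GLs (transv m n c) (mat 1)"
proof (rule pc_path[of "\<lambda>t. (1-t) *\<^sub>R transv m n c + t *\<^sub>R mat 1"])
  show "continuous_on {0..1} (\<lambda>t. (1-t) *\<^sub>R transv m n c + t *\<^sub>R mat 1)"
    by (intro continuous_intros)
  fix t :: real
  have "(1-t) *\<^sub>R transv m n c + t *\<^sub>R mat 1 = transv m n ((1-t) * c)"
    using assms by (auto simp: transv_def mat_def vec_eq_iff algebra_simps)
  then show "(1-t) *\<^sub>R transv m n c + t *\<^sub>R mat 1 \<in> GLs"
    using transv_ker[OF assms] by (simp add: det_nz_ker)
qed simp_all

lemma GL_two:
  fixes A :: "real^'n^'n" and a :: "'n::finite"
  shows "det A \<noteq> 0 \<longrightarrow> path_component GLs A (mat 1) \<or> path_component GLs A (Ed a (-1))"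
proof (induction A rule: induct_matrix_elementary)
  case (1 A B)
  show ?case
  proof
    assume "det (A ** B) \<noteq> 0"
    then have "det A \<noteq> 0" "det B \<noteq> 0" by (auto simp: det_mul)
    then have hA: "path_component GLs A (mat 1) \<or> path_component GLs A (Ed a (-1))"
      and hB: "path_component GLs B (mat 1) \<or> path_component GLs B (Ed a (-1))"
      using 1 by auto
    show "path_component GLs (A ** B) (mat 1) \<or> path_component GLs (A ** B) (Ed a (-1))"
      using hA hB pc_mult[of A _ B] Ed_mult_Ed[of a] by fastforce
  qed
next
  case (2 A i)
  then show ?case by (simp add: det_zero_row)
next
  case (3 A)
  then show ?case using diag_conn by blast
next
  case (4 m n)
  have "path_component GLs (swp m n) (Ed a (-1))"
    using swp_Ed[OF 4] Ed_Ed[of m a] by (meson path_component_trans)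
  then show ?case by (simp add: swp_def)
next
  case (5 m n c)
  then show ?case using transv_conn[OF 5, of c] by (simp add: transv_def)
qed



lemma GLp_one:
  fixes A :: "real^'n^'n"
  assumes A: "det A > 0"
  shows "path_component {M. det M > 0} A (mat 1)"
proof -
  have key: "\<forall>t\<in>{0..1}. det (g t) > 0"
    if g: "path g" "path_image g \<subseteq> GLs" "pathstart g = A" for g :: "real \<Rightarrow> real^'n^'n"
  proof
    fix t :: real assume t: "t \<in> {0..1}"
    have cont: "continuous_on {0..1} (\<lambda>t. det (g t))"
      using g(1) unfolding path_def by (rule continuous_on_det)
    have nz: "\<And>s. s \<in> {0..1} \<Longrightarrow> det (g s) \<noteq> 0"
      using g(2) unfolding path_image_def by blast
    have "det (g 0) > 0" using g(3) A by (simp add: pathstart_def)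
    then show "det (g t) > 0" using sign_pres[of "\<lambda>s. det (g s)", OF cont nz _ t] by simp
  qed
  have "path_component GLs A (mat 1) \<or> path_component GLs A (Ed undefined (-1))"
    using GL_two[of A undefined] A by simp
  then show ?thesis
  proof
    assume "path_component GLs A (mat 1)"
    then obtain g where g: "path g" "path_image g \<subseteq> GLs" "pathstart g = A" "pathfinish g = mat 1"
      unfolding path_component_def by blast
    have "path_image g \<subseteq> {M. det M > 0}"
      using key[OF g(1-3)] unfolding path_image_def by blast
    then show ?thesis unfolding path_component_def
      using g by blast
  next
    assume "path_component GLs A (Ed undefined (-1))"
    then obtain g where g: "path g" "path_image g \<subseteq> GLs" "pathstart g = A" "pathfinish g = Ed undefined (-1)"
      unfolding path_component_def by blast
    have "det (g 1) > 0" using key[OF g(1-3)] by simp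
    then show ?thesis using g(4) by (simp add: pathfinish_def det_Ed)
  qed
qed

lemma GLp_conn:
  fixes A B :: "real^'n^'n"
  assumes "det A > 0" "det B > 0"
  shows "path_component {M. det M > 0} A B"
  using path_component_trans[OF GLp_one[OF assms(1)] path_component_sym[OF GLp_one[OF assms(2)]]] .

definition minv :: "real^'n^'n \<Rightarrow> real^'n^'n" where
  "minv A = (\<chi> k j. det (\<chi> i l. if l = k then mat 1 $ i $ j else A $ i $ l) / det A)"

lemma minv_right: "det A \<noteq> 0 \<Longrightarrow> A ** minv A = mat 1"
proof -
  assume d: "det A \<noteq> 0"
  have col: "A *v (\<chi> k. minv A $ k $ j) = (\<chi> i. mat 1 $ i $ j)" for j
  proof -
    have c: "A *v (\<chi> k. det (\<chi> i l. if l = k then (\<chi> i. mat 1 $ i $ j) $ i else A $ i $ l) / det A) = (\<chi> i. mat 1 $ i $ j)"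
      by (rule cramer[OF d, THEN iffD2, OF refl])
    have "(\<chi> k. minv A $ k $ j) = (\<chi> k. det (\<chi> i l. if l = k then (\<chi> i. mat 1 $ i $ j) $ i else A $ i $ l) / det A)"
      by (simp only: minv_def vec_lambda_beta)
    then show ?thesis using c by simp
  qed
  have "(A ** minv A) $ i $ j = mat 1 $ i $ j" for i j
  proof -
    have "(A ** minv A) $ i $ j = (A *v (\<chi> k. minv A $ k $ j)) $ i"
      by (simp add: matrix_matrix_mult_def matrix_vector_mult_def)
    also have "\<dots> = mat 1 $ i $ j" by (simp only: col vec_lambda_beta)
    finally show ?thesis .
  qed
  then show ?thesis by (simp add: vec_eq_iff)
qed

lemma minv_left: "det A \<noteq> 0 \<Longrightarrow> minv A ** A = mat 1"
  using minv_right matrix_left_right_inverse by blast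

lemma continuous_on_minv[continuous_intros]:
  fixes P :: "'a::topological_space \<Rightarrow> real^'n^'n"
  assumes "continuous_on S P" "\<And>t. t \<in> S \<Longrightarrow> det (P t) \<noteq> 0"
  shows "continuous_on S (\<lambda>t. minv (P t))"
proof -
  have c: "continuous_on S (\<lambda>x. if l = k then mat 1 $ i $ j else P x $ i $ l)" for k j i l
  proof (cases "l = k")
    case True then show ?thesis by simp
  next
    case False then show ?thesis by (simp add: continuous_on_component assms(1))
  qed
  show ?thesis unfolding minv_def using assms by (intro continuous_intros c) auto
qed



lemma mm_radd: "((A::real^'m^'n) + B) ** C = A ** C + B ** C"
  by (simp add: matrix_matrix_mult_def vec_eq_iff distrib_right sum.distrib)
lemma tr_add: "transpose ((A::real^'m^'n) + B) = transpose A + transpose B"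
  by (simp add: transpose_def vec_eq_iff)
lemma mm_rscale: "(c *\<^sub>R (A::real^'m^'n)) ** C = c *\<^sub>R (A ** C)"
  by (simp add: scalar_matrix_assoc)
lemma mm_lscale: "(C::real^'m^'n) ** (c *\<^sub>R A) = c *\<^sub>R (C ** A)"
  by (simp add: matrix_scalar_ac scalar_matrix_assoc)

lemma sum_plus_UNIV:
  fixes f :: "('a::finite + 'b::finite) \<Rightarrow> 'c::comm_monoid_add"
  shows "sum f UNIV = (\<Sum>a\<in>UNIV. f (Inl a)) + (\<Sum>b\<in>UNIV. f (Inr b))"
proof -
  have "sum f UNIV = sum f (range Inl) + sum f (range Inr)"
    unfolding UNIV_sum by (rule sum.union_disjoint) auto
  also have "\<dots> = (\<Sum>a\<in>UNIV. f (Inl a)) + (\<Sum>b\<in>UNIV. f (Inr b))"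
    by (simp add: sum.reindex)
  finally show ?thesis .
qed

lemma blk2_mv_Inl: "(blk2 P Q R S *v v) $ Inl a = (P *v (\<chi> b. v $ Inl b)) $ a + (Q *v (\<chi> b. v $ Inr b)) $ a"
  by (simp add: blk2_def matrix_vector_mult_def sum_plus_UNIV)
lemma blk2_mv_Inr: "(blk2 P Q R S *v v) $ Inr a = (R *v (\<chi> b. v $ Inl b)) $ a + (S *v (\<chi> b. v $ Inr b)) $ a"
  by (simp add: blk2_def matrix_vector_mult_def sum_plus_UNIV)

lemma matrix_vector_mult_minus_distrib: "(M::real^'m^'n) *v (- v) = - (M *v v)"
  by (simp add: matrix_vector_mult_def vec_eq_iff sum_negf)

lemma IYX:
  fixes X Y :: "real^'x^'x"
  assumes "pos_def (blk2 X (mat 1) (mat 1) Y)"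
  shows "det (mat 1 - Y ** X) \<noteq> 0"
proof
  assume "det (mat 1 - Y ** X) = 0"
  then obtain u where u: "u \<noteq> 0" "(mat 1 - Y ** X) *v u = 0" by (rule ker_det_z)
  then have yxu: "Y *v (X *v u) = u"
    by (simp add: matrix_vector_mult_diff_rdistrib matrix_vector_mul_assoc)
  define v :: "real^('x+'x)" where "v = (\<chi> i. case i of Inl a \<Rightarrow> u $ a | Inr a \<Rightarrow> - (X *v u) $ a)"
  have l: "(\<chi> b. v $ Inl b) = u" and r: "(\<chi> b. v $ Inr b) = - (X *v u)"
    by (simp_all add: v_def vec_eq_iff)
  have "blk2 X (mat 1) (mat 1) Y *v v = 0"
  proof (rule vec_eq_iff[THEN iffD2], rule allI)
    fix i show "(blk2 X (mat 1) (mat 1) Y *v v) $ i = 0 $ i"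
    proof (cases i)
      case (Inl a) then show ?thesis
        by (simp add: blk2_mv_Inl l r matrix_vector_mult_minus_distrib)
    next
      case (Inr a) then show ?thesis
        using arg_cong[OF yxu, of "\<lambda>w. w $ a"]
        by (simp add: blk2_mv_Inr l r matrix_vector_mult_minus_distrib)
    qed
  qed
  moreover have "v \<noteq> 0"
  proof
    assume "v = 0"
    then have "u = 0" using l by (simp add: vec_eq_iff)
    then show False using u by simp
  qed
  ultimately show False using assms unfolding pos_def_def by force
qed



lemma pos_def_comb:
  fixes P Q :: "real^'n^'n"
  assumes "pos_def P" "pos_def Q" "0 \<le> t" "t \<le> 1"
  shows "pos_def ((1-t) *\<^sub>R P + t *\<^sub>R Q)"
  unfolding pos_def_def symmetric_mat_def
proof (intro conjI allI impI)
  show "transpose ((1-t) *\<^sub>R P + t *\<^sub>R Q) = (1-t) *\<^sub>R P + t *\<^sub>R Q"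
    using assms(1,2) by (simp add: pos_def_def symmetric_mat_def tr_add transpose_scalar)
  fix v :: "real^'n" assume v: "v \<noteq> 0"
  have p: "v \<bullet> (P *v v) > 0" and q: "v \<bullet> (Q *v v) > 0"
    using assms(1,2) v by (auto simp: pos_def_def)
  have "v \<bullet> (((1-t) *\<^sub>R P + t *\<^sub>R Q) *v v) = (1-t) * (v \<bullet> (P *v v)) + t * (v \<bullet> (Q *v v))"
    by (simp add: matrix_vector_mult_add_rdistrib scaleR_matrix_vector_assoc[symmetric] inner_add_right)
  also have "\<dots> > 0"
  proof (cases "t = 0")
    case True then show ?thesis using p by simp
  next
    case False then have "t > 0" using assms by simp
    then show ?thesis using p q assms(4)
      by (smt (verit) mult_nonneg_nonneg mult_pos_pos)
  qed
  finally show "0 < v \<bullet> (((1-t) *\<^sub>R P + t *\<^sub>R Q) *v v)" .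
qed

lemma neg_def_comb:
  fixes P Q :: "real^'n^'n"
  assumes "neg_def P" "neg_def Q" "0 \<le> t" "t \<le> 1"
  shows "neg_def ((1-t) *\<^sub>R P + t *\<^sub>R Q)"
proof -
  have "- ((1-t) *\<^sub>R P + t *\<^sub>R Q) = (1-t) *\<^sub>R (-P) + t *\<^sub>R (-Q)" by simp
  then show ?thesis using pos_def_comb[of "-P" "-Q" t] assms unfolding neg_def_def by simp
qed

lemma blk2_comb:
  "a *\<^sub>R blk2 P Q R S + b *\<^sub>R blk2 P' Q' R' S' =
   blk2 (a *\<^sub>R P + b *\<^sub>R P') (a *\<^sub>R Q + b *\<^sub>R Q') (a *\<^sub>R R + b *\<^sub>R R') (a *\<^sub>R S + b *\<^sub>R S')"
  by (simp add: blk2_def vec_eq_iff split: sum.split)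

definition aff :: "('a::real_vector \<Rightarrow> 'b::real_vector) \<Rightarrow> bool" where
  "aff f \<longleftrightarrow> (\<forall>a b x y. a + b = 1 \<longrightarrow> f (a *\<^sub>R x + b *\<^sub>R y) = a *\<^sub>R f x + b *\<^sub>R f y)"

lemma aff_const: "aff (\<lambda>p. K)"
  unfolding aff_def by (metis scaleR_add_left scaleR_one)

lemma aff_id: "aff (\<lambda>p. p)"
  unfolding aff_def by simp

lemma aff_add: "aff f \<Longrightarrow> aff g \<Longrightarrow> aff (\<lambda>p. f p + g p)"
  unfolding aff_def by (simp add: scaleR_add_right algebra_simps)

lemma aff_fst: "aff f \<Longrightarrow> aff (\<lambda>p. fst (f p))"
  unfolding aff_def by simp

lemma aff_snd: "aff f \<Longrightarrow> aff (\<lambda>p. snd (f p))"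
  unfolding aff_def by simp

lemma aff_lmul: "aff f \<Longrightarrow> aff (\<lambda>p. (C::real^'m^'n) ** f p)"
  unfolding aff_def by (simp add: matrix_add_ldistrib mm_lscale)

lemma aff_rmul: "aff f \<Longrightarrow> aff (\<lambda>p. f p ** (C::real^'m^'n))"
  unfolding aff_def by (simp add: mm_radd mm_rscale)

lemma aff_tr: "aff f \<Longrightarrow> aff (\<lambda>p. transpose (f p :: real^'m^'n))"
  unfolding aff_def by (simp add: tr_add transpose_scalar)

lemma aff_blk2: "aff f1 \<Longrightarrow> aff f2 \<Longrightarrow> aff f3 \<Longrightarrow> aff f4 \<Longrightarrow>
    aff (\<lambda>p. blk2 (f1 p) (f2 p) (f3 p) (f4 p))"
  unfolding aff_def by (simp add: blk2_comb)

lemmas aff_rules = aff_const aff_add aff_lmul aff_rmul aff_tr aff_blk2 aff_fst aff_snd aff_id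

lemma aff_Mgam: "aff (\<lambda>p. Mgam A B1 B2 C1 C2 D11 D12 D21 \<gamma> (fst p) (fst (snd p)) (fst (snd (snd p)))
     (fst (snd (snd (snd p)))) (fst (snd (snd (snd (snd p))))) (snd (snd (snd (snd (snd p))))))"
  unfolding Mgam_def Let_def by (intro aff_rules)

lemma Mgam_comb:
  "Mgam A B1 B2 C1 C2 D11 D12 D21 \<gamma> ((1-t) *\<^sub>R X + t *\<^sub>R X') ((1-t) *\<^sub>R Y + t *\<^sub>R Y')
      ((1-t) *\<^sub>R Ah + t *\<^sub>R Ah') ((1-t) *\<^sub>R Bh + t *\<^sub>R Bh') ((1-t) *\<^sub>R Ch + t *\<^sub>R Ch') ((1-t) *\<^sub>R Dh + t *\<^sub>R Dh')
   = (1-t) *\<^sub>R Mgam A B1 B2 C1 C2 D11 D12 D21 \<gamma> X Y Ah Bh Ch Dh + t *\<^sub>R Mgam A B1 B2 C1 C2 D11 D12 D21 \<gamma> X' Y' Ah' Bh' Ch' Dh'"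
  using aff_Mgam[of A B1 B2 C1 C2 D11 D12 D21 \<gamma>, unfolded aff_def, rule_format,
      of "1-t" t "(X,Y,Ah,Bh,Ch,Dh)" "(X',Y',Ah',Bh',Ch',Dh')"]
  by simp

lemma F_comb:
  assumes "(X,Y,Ah,Bh,Ch,Dh) \<in> Fset A B1 B2 C1 C2 D11 D12 D21 \<gamma>"
    and "(X',Y',Ah',Bh',Ch',Dh') \<in> Fset A B1 B2 C1 C2 D11 D12 D21 \<gamma>"
    and t: "0 \<le> t" "t \<le> 1"
  shows "((1-t) *\<^sub>R X + t *\<^sub>R X', (1-t) *\<^sub>R Y + t *\<^sub>R Y', (1-t) *\<^sub>R Ah + t *\<^sub>R Ah',
          (1-t) *\<^sub>R Bh + t *\<^sub>R Bh', (1-t) *\<^sub>R Ch + t *\<^sub>R Ch', (1-t) *\<^sub>R Dh + t *\<^sub>R Dh')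
         \<in> Fset A B1 B2 C1 C2 D11 D12 D21 \<gamma>"
proof -
  have cs: "(1-t) *\<^sub>R M + t *\<^sub>R M = M" for M :: "real^'x^'x"
    by (simp add: scaleR_add_left[symmetric])
  have b: "blk2 ((1-t) *\<^sub>R X + t *\<^sub>R X') (mat 1) (mat 1) ((1-t) *\<^sub>R Y + t *\<^sub>R Y')
      = (1-t) *\<^sub>R blk2 X (mat 1) (mat 1) Y + t *\<^sub>R blk2 X' (mat 1) (mat 1) Y'"
    unfolding blk2_comb cs ..
  have s0: "transpose X = X" "transpose Y = Y" "pos_def (blk2 X (mat 1) (mat 1) Y)"
      "neg_def (Mgam A B1 B2 C1 C2 D11 D12 D21 \<gamma> X Y Ah Bh Ch Dh)"
    using assms(1) by (simp_all add: Fset_def symmetric_mat_def)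
  have s1: "transpose X' = X'" "transpose Y' = Y'" "pos_def (blk2 X' (mat 1) (mat 1) Y')"
      "neg_def (Mgam A B1 B2 C1 C2 D11 D12 D21 \<gamma> X' Y' Ah' Bh' Ch' Dh')"
    using assms(2) by (simp_all add: Fset_def symmetric_mat_def)
  have "transpose ((1-t) *\<^sub>R X + t *\<^sub>R X') = (1-t) *\<^sub>R X + t *\<^sub>R X'"
    "transpose ((1-t) *\<^sub>R Y + t *\<^sub>R Y') = (1-t) *\<^sub>R Y + t *\<^sub>R Y'"
    by (simp_all only: tr_add transpose_scalar s0 s1)
  moreover have "pos_def (blk2 ((1-t) *\<^sub>R X + t *\<^sub>R X') (mat 1) (mat 1) ((1-t) *\<^sub>R Y + t *\<^sub>R Y'))"
    unfolding b by (rule pos_def_comb[OF s0(3) s1(3) t])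
  moreover have "neg_def (Mgam A B1 B2 C1 C2 D11 D12 D21 \<gamma> ((1-t) *\<^sub>R X + t *\<^sub>R X') ((1-t) *\<^sub>R Y + t *\<^sub>R Y')
      ((1-t) *\<^sub>R Ah + t *\<^sub>R Ah') ((1-t) *\<^sub>R Bh + t *\<^sub>R Bh') ((1-t) *\<^sub>R Ch + t *\<^sub>R Ch') ((1-t) *\<^sub>R Dh + t *\<^sub>R Dh'))"
    unfolding Mgam_comb by (rule neg_def_comb[OF s0(4) s1(4) t])
  ultimately show ?thesis unfolding Fset_def symmetric_mat_def by simp
qed

lemma GL_same_sign:
  fixes P0 P1 :: "real^'n^'n"
  assumes "det P0 * det P1 > 0"
  obtains h where "continuous_on {0..(1::real)} h" "h 0 = P0" "h 1 = P1" "\<And>t. t \<in> {0..1} \<Longrightarrow> det (h t) \<noteq> 0"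
proof (cases "det P0 > 0")
  case True
  then have "det P1 > 0" using assms by (simp add: zero_less_mult_iff)
  then obtain h where h: "path h" "path_image h \<subseteq> {M. det M > 0}" "pathstart h = P0" "pathfinish h = P1"
    using GLp_conn[OF True] unfolding path_component_def by blast
  have "det (h t) \<noteq> 0" if "t \<in> {0..1}" for t
    using h(2) that unfolding path_image_def by force
  then show ?thesis using that[of h] h(1,3,4)
    unfolding path_def pathstart_def pathfinish_def by blast
next
  case False
  let ?J = "Ed (undefined::'n) (-1)"
  have d0: "det P0 < 0" using False assms by (cases "det P0 = 0") (auto simp: zero_less_mult_iff)
  then have d1: "det P1 < 0" using assms by (simp add: zero_less_mult_iff)
  have "det (P0 ** ?J) > 0" "det (P1 ** ?J) > 0" using d0 d1 by (simp_all add: det_mul det_Ed)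
  then obtain h where h: "path h" "path_image h \<subseteq> {M. det M > 0}" "pathstart h = P0 ** ?J" "pathfinish h = P1 ** ?J"
    using GLp_conn unfolding path_component_def by blast
  show ?thesis
  proof (rule that[of "\<lambda>t. h t ** ?J"])
    show "continuous_on {0..1} (\<lambda>t. h t ** ?J)"
      using h(1) unfolding path_def by (intro continuous_intros)
    show "h 0 ** ?J = P0" "h 1 ** ?J = P1"
      using h(3,4) by (simp_all add: pathstart_def pathfinish_def flip: matrix_mul_assoc add: Ed_mult_Ed)
    fix t :: real assume "t \<in> {0..1}"
    then have "det (h t) > 0" using h(2) unfolding path_image_def by blast
    then show "det (h t ** ?J) \<noteq> 0" by (simp add: det_mul det_Ed)
  qed
qed



lemma G_mem: "((X,Y,Ah,Bh,Ch,Dh,Pm,Qm) \<in> Gset A B1 B2 C1 C2 D11 D12 D21 \<gamma>) \<longleftrightarrow>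
   (X,Y,Ah,Bh,Ch,Dh) \<in> Fset A B1 B2 C1 C2 D11 D12 D21 \<gamma> \<and> Qm ** Pm = mat 1 - Y ** X"
  by (simp add: Gset_def)

lemma F_N: "(X,Y,Ah,Bh,Ch,Dh) \<in> Fset A B1 B2 C1 C2 D11 D12 D21 \<gamma> \<Longrightarrow> det (mat 1 - Y ** X) \<noteq> 0"
  by (rule IYX) (simp add: Fset_def)

lemma G_det:
  assumes "(X,Y,Ah,Bh,Ch,Dh,Pm,Qm) \<in> Gset A B1 B2 C1 C2 D11 D12 D21 \<gamma>"
  shows "det Pm \<noteq> 0"
proof
  assume z: "det Pm = 0"
  have F: "(X,Y,Ah,Bh,Ch,Dh) \<in> Fset A B1 B2 C1 C2 D11 D12 D21 \<gamma>" and e: "Qm ** Pm = mat 1 - Y ** X"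
    using assms by (simp_all add: G_mem)
  have "det (mat 1 - Y ** X) = det Qm * det Pm" using e det_mul by metis
  with F_N[OF F] z show False by simp
qed

definition piof :: "'a \<times> 'b \<times> 'c \<times> 'd \<times> 'e \<times> 'f \<times> 'g \<times> 'h \<Rightarrow> 'g" where
  "piof p = fst (snd (snd (snd (snd (snd (snd p))))))"

lemma piof_simp[simp]: "piof (X,Y,Ah,Bh,Ch,Dh,Pm,Qm) = Pm" by (simp add: piof_def)

lemma G_det': "p \<in> Gset A B1 B2 C1 C2 D11 D12 D21 \<gamma> \<Longrightarrow> det (piof p) \<noteq> 0"
  by (cases p) (auto dest: G_det)

lemma continuous_on_piof[continuous_intros]:
  "continuous_on S f \<Longrightarrow> continuous_on S (\<lambda>t. piof (f t))"
  unfolding piof_def by (intro continuous_intros)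

lemma Q_eq: "det P \<noteq> 0 \<Longrightarrow> Q ** P = N \<Longrightarrow> Q = N ** minv P"
  by (metis matrix_mul_assoc matrix_mul_rid minv_right)

lemma QP: "det P \<noteq> 0 \<Longrightarrow> (N ** minv P) ** P = N"
  by (metis matrix_mul_assoc matrix_mul_rid minv_left)

lemma G_conn:
  assumes x: "(X0,Y0,Ah0,Bh0,Ch0,Dh0,P0,Q0) \<in> Gset A B1 B2 C1 C2 D11 D12 D21 \<gamma>"
    and y: "(X1,Y1,Ah1,Bh1,Ch1,Dh1,P1,Q1) \<in> Gset A B1 B2 C1 C2 D11 D12 D21 \<gamma>"
    and s: "det P0 * det P1 > 0"
  shows "path_component (Gset A B1 B2 C1 C2 D11 D12 D21 \<gamma>) (X0,Y0,Ah0,Bh0,Ch0,Dh0,P0,Q0) (X1,Y1,Ah1,Bh1,Ch1,Dh1,P1,Q1)"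
proof -
  let ?G = "Gset A B1 B2 C1 C2 D11 D12 D21 \<gamma>"
  have d0: "det P0 \<noteq> 0" and d1: "det P1 \<noteq> 0" using G_det[OF x] G_det[OF y] by simp_all
  have F0: "(X0,Y0,Ah0,Bh0,Ch0,Dh0) \<in> Fset A B1 B2 C1 C2 D11 D12 D21 \<gamma>" and e0: "Q0 ** P0 = mat 1 - Y0 ** X0"
    using x by (simp_all add: G_mem)
  have F1: "(X1,Y1,Ah1,Bh1,Ch1,Dh1) \<in> Fset A B1 B2 C1 C2 D11 D12 D21 \<gamma>" and e1: "Q1 ** P1 = mat 1 - Y1 ** X1"
    using y by (simp_all add: G_mem)
  define g1 where "g1 = (\<lambda>t::real. ((1-t) *\<^sub>R X0 + t *\<^sub>R X1, (1-t) *\<^sub>R Y0 + t *\<^sub>R Y1, (1-t) *\<^sub>R Ah0 + t *\<^sub>R Ah1,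
          (1-t) *\<^sub>R Bh0 + t *\<^sub>R Bh1, (1-t) *\<^sub>R Ch0 + t *\<^sub>R Ch1, (1-t) *\<^sub>R Dh0 + t *\<^sub>R Dh1, P0,
          (mat 1 - ((1-t) *\<^sub>R Y0 + t *\<^sub>R Y1) ** ((1-t) *\<^sub>R X0 + t *\<^sub>R X1)) ** minv P0))"
  have p1: "path_component ?G (X0,Y0,Ah0,Bh0,Ch0,Dh0,P0,Q0)
     (X1,Y1,Ah1,Bh1,Ch1,Dh1,P0,(mat 1 - Y1 ** X1) ** minv P0)"
  proof (rule pc_path[of g1])
    show "continuous_on {0..1} g1"
      unfolding g1_def by (intro continuous_intros)
    have q0: "(mat 1 - Y0 ** X0) ** minv P0 = Q0" using Q_eq[OF d0 e0] by simp
    show "g1 0 = (X0,Y0,Ah0,Bh0,Ch0,Dh0,P0,Q0)" unfolding g1_def q0[symmetric] by simp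
    show "g1 1 = (X1,Y1,Ah1,Bh1,Ch1,Dh1,P0,(mat 1 - Y1 ** X1) ** minv P0)" unfolding g1_def by simp
    fix t :: real assume t: "t \<in> {0..1}"
    have t01: "0 \<le> t" "t \<le> 1" using t by auto
    show "g1 t \<in> ?G" unfolding g1_def G_mem by (rule conjI[OF F_comb[OF F0 F1 t01] QP[OF d0]])
  qed
  obtain h where h: "continuous_on {0..(1::real)} h" "h 0 = P0" "h 1 = P1" "\<And>t. t \<in> {0..1} \<Longrightarrow> det (h t) \<noteq> 0"
    using GL_same_sign[OF s] by blast
  define g2 where "g2 = (\<lambda>t::real. (X1,Y1,Ah1,Bh1,Ch1,Dh1,h t,(mat 1 - Y1 ** X1) ** minv (h t)))"
  have p2: "path_component ?G (X1,Y1,Ah1,Bh1,Ch1,Dh1,P0,(mat 1 - Y1 ** X1) ** minv P0)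
     (X1,Y1,Ah1,Bh1,Ch1,Dh1,P1,Q1)"
  proof (rule pc_path[of g2])
    show "continuous_on {0..1} g2"
      unfolding g2_def using h(1,4) by (intro continuous_intros) auto
    have q1: "(mat 1 - Y1 ** X1) ** minv P1 = Q1" using Q_eq[OF d1 e1] by simp
    show "g2 0 = (X1,Y1,Ah1,Bh1,Ch1,Dh1,P0,(mat 1 - Y1 ** X1) ** minv P0)" unfolding g2_def h(2) ..
    show "g2 1 = (X1,Y1,Ah1,Bh1,Ch1,Dh1,P1,Q1)" unfolding g2_def h(3) q1 ..
    fix t :: real assume t: "t \<in> {0..1}"
    show "g2 t \<in> ?G"
      unfolding g2_def G_mem by (rule conjI[OF F1 QP[OF h(4)[OF t]]])
  qed
  show ?thesis using p1 p2 by (rule path_component_trans)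
qed



lemma tuple8_cases:
  obtains a b c d e f g h where "p = (a,b,c,d,e,f,g,h)"
  using that[of "fst p" "fst (snd p)" "fst (snd (snd p))" "fst (snd (snd (snd p)))"
      "fst (snd (snd (snd (snd p))))" "fst (snd (snd (snd (snd (snd p)))))"
      "fst (snd (snd (snd (snd (snd (snd p))))))" "snd (snd (snd (snd (snd (snd (snd p))))))"]
  by simp

lemma G_det'':
  assumes "p \<in> Gset A B1 B2 C1 C2 D11 D12 D21 \<gamma>"
  shows "det (piof p) \<noteq> 0"
proof -
  obtain a b c d e f g h where p: "p = (a,b,c,d,e,f,g,h)" by (rule tuple8_cases)
  show ?thesis using G_det[of a b c d e f g h] assms unfolding p by simp
qed

lemma G_conn':
  assumes "x \<in> Gset A B1 B2 C1 C2 D11 D12 D21 \<gamma>" "y \<in> Gset A B1 B2 C1 C2 D11 D12 D21 \<gamma>"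
    "det (piof x) * det (piof y) > 0"
  shows "path_component (Gset A B1 B2 C1 C2 D11 D12 D21 \<gamma>) x y"
proof -
  obtain a b c d e f g h where x: "x = (a,b,c,d,e,f,g,h)" by (rule tuple8_cases)
  obtain a' b' c' d' e' f' g' h' where y: "y = (a',b',c',d',e',f',g',h')" by (rule tuple8_cases)
  show ?thesis using G_conn[of a b c d e f g h _ _ _ _ _ _ _ _ _ a' b' c' d' e' f' g' h'] assms
    unfolding x y by simp
qed

lemma G_sign:
  assumes pc: "path_component (Gset A B1 B2 C1 C2 D11 D12 D21 \<gamma>) x y" and x: "det (piof x) > 0"
  shows "det (piof y) > 0"
proof -
  obtain g where g: "path g" "path_image g \<subseteq> Gset A B1 B2 C1 C2 D11 D12 D21 \<gamma>" "pathstart g = x" "pathfinish g = y"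
    using pc unfolding path_component_def by blast
  have cont: "continuous_on {0..1} (\<lambda>t. det (piof (g t)))"
    using g(1) unfolding path_def by (intro continuous_intros)
  have nz: "det (piof (g s)) \<noteq> 0" if "s \<in> {0..1}" for s
  proof -
    have "g s \<in> Gset A B1 B2 C1 C2 D11 D12 D21 \<gamma>" using g(2) that unfolding path_image_def by blast
    then show ?thesis by (rule G_det'')
  qed
  have "det (piof (g 0)) > 0" using g(3) x by (simp add: pathstart_def)
  then have "det (piof (g 1)) > 0"
    using sign_pres[of "\<lambda>s. det (piof (g s))", OF cont nz] by simp
  then show ?thesis using g(4) by (simp add: pathfinish_def)
qed

lemma G_sign_neg:
  assumes pc: "path_component (Gset A B1 B2 C1 C2 D11 D12 D21 \<gamma>) x y" and x: "det (piof x) < 0"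
  shows "det (piof y) < 0"
proof -
  obtain g where g: "path g" "path_image g \<subseteq> Gset A B1 B2 C1 C2 D11 D12 D21 \<gamma>" "pathstart g = x" "pathfinish g = y"
    using pc unfolding path_component_def by blast
  have cont: "continuous_on {0..1} (\<lambda>t. - det (piof (g t)))"
    using g(1) unfolding path_def by (intro continuous_intros)
  have nz: "- det (piof (g s)) \<noteq> 0" if "s \<in> {0..1}" for s
  proof -
    have "g s \<in> Gset A B1 B2 C1 C2 D11 D12 D21 \<gamma>" using g(2) that unfolding path_image_def by blast
    then show ?thesis using G_det'' by simp
  qed
  have "- det (piof (g 0)) > 0" using g(3) x by (simp add: pathstart_def)
  then have "- det (piof (g 1)) > 0"
    using sign_pres[of "\<lambda>s. - det (piof (g s))", OF cont nz] by simp
  then show ?thesis using g(4) by (simp add: pathfinish_def)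
qed

theorem proposition2:
  fixes A :: "real^'x^'x" and B1 :: "real^'w^'x" and B2 :: "real^'u^'x"
    and C1 :: "real^'x^'z" and C2 :: "real^'x^'y"
    and D11 :: "real^'w^'z" and D12 :: "real^'u^'z" and D21 :: "real^'w^'y"
    and \<gamma> :: real
  assumes "stabilizable A B2" and "detectable C2 A"
    and "\<gamma> > 0"
    and "Fset A B1 B2 C1 C2 D11 D12 D21 \<gamma> \<noteq> {}"
  shows "path_components_of
           (subtopology euclidean (Gset A B1 B2 C1 C2 D11 D12 D21 \<gamma>)) =
         { {(X, Y, Ah, Bh, Ch, Dh, Pi, Xi) \<in> Gset A B1 B2 C1 C2 D11 D12 D21 \<gamma>. det Pi > 0},
           {(X, Y, Ah, Bh, Ch, Dh, Pi, Xi) \<in> Gset A B1 B2 C1 C2 D11 D12 D21 \<gamma>. det Pi < 0} }"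
proof -
  let ?G = "Gset A B1 B2 C1 C2 D11 D12 D21 \<gamma>"
  let ?Gp = "{p \<in> ?G. det (piof p) > 0}" and ?Gm = "{p \<in> ?G. det (piof p) < 0}"
  have ep: "{(X, Y, Ah, Bh, Ch, Dh, Pi, Xi) \<in> ?G. det Pi > 0} = ?Gp"
    by (auto simp: piof_def)
  have em: "{(X, Y, Ah, Bh, Ch, Dh, Pi, Xi) \<in> ?G. det Pi < 0} = ?Gm"
    by (auto simp: piof_def)
  have comp: "Collect (path_component ?G x) = (if det (piof x) > 0 then ?Gp else ?Gm)"
    if x: "x \<in> ?G" for x
  proof -
    have dx: "det (piof x) \<noteq> 0" using G_det'' x by blast
    show ?thesis
    proof (cases "det (piof x) > 0")
      case True
      have "Collect (path_component ?G x) = ?Gp"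
      proof (intro set_eqI iffI)
        fix y assume "y \<in> Collect (path_component ?G x)"
        then have pc: "path_component ?G x y" by simp
        show "y \<in> ?Gp" using path_component_mem(2)[OF pc] G_sign[OF pc True] by simp
      next
        fix y assume y: "y \<in> ?Gp"
        then have "det (piof x) * det (piof y) > 0" using True by simp
        then show "y \<in> Collect (path_component ?G x)" using G_conn'[OF x] y by simp
      qed
      then show ?thesis using True by simp
    next
      case False
      then have neg: "det (piof x) < 0" using dx by simp
      have "Collect (path_component ?G x) = ?Gm"
      proof (intro set_eqI iffI)
        fix y assume "y \<in> Collect (path_component ?G x)"
        then have pc: "path_component ?G x y" by simp
        show "y \<in> ?Gm" using path_component_mem(2)[OF pc] G_sign_neg[OF pc neg] by simp
      next
        fix y assume y: "y \<in> ?Gm"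
        then have "det (piof x) * det (piof y) > 0" using neg by (simp add: mult_neg_neg)
        then show "y \<in> Collect (path_component ?G x)" using G_conn'[OF x] y by simp
      qed
      then show ?thesis using False by simp
    qed
  qed
  obtain X Y Ah Bh Ch Dh where f: "(X,Y,Ah,Bh,Ch,Dh) \<in> Fset A B1 B2 C1 C2 D11 D12 D21 \<gamma>"
    using assms(4) by (metis ex_in_conv prod_cases6)
  let ?N = "mat 1 - Y ** X" and ?J = "Ed (undefined::'x) (-1)"
  have w1: "(X,Y,Ah,Bh,Ch,Dh,mat 1,?N) \<in> ?G" using f by (simp add: G_mem)
  have JJ: "(?N ** ?J) ** ?J = ?N" by (simp add: Ed_mult_Ed flip: matrix_mul_assoc)
  have w2: "(X,Y,Ah,Bh,Ch,Dh,?J,?N ** ?J) \<in> ?G" using f JJ by (simp add: G_mem)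
  have c1: "Collect (path_component ?G (X,Y,Ah,Bh,Ch,Dh,mat 1,?N)) = ?Gp"
    using comp[OF w1] by simp
  have c2: "Collect (path_component ?G (X,Y,Ah,Bh,Ch,Dh,?J,?N ** ?J)) = ?Gm"
    using comp[OF w2] by (simp add: det_Ed)
  have "path_components_of (subtopology euclidean ?G) = (\<lambda>x. Collect (path_component ?G x)) ` ?G"
  proof -
    have e: "path_component_of (top_of_set ?G) = path_component ?G" by (simp add: fun_eq_iff)
    have t: "topspace (top_of_set ?G) = ?G" by simp
    show ?thesis unfolding path_components_of_def e t by (rule refl)
  qed
  also have "\<dots> = {?Gp, ?Gm}"
  proof
    show "(\<lambda>x. Collect (path_component ?G x)) ` ?G \<subseteq> {?Gp, ?Gm}"
    proof
      fix S assume "S \<in> (\<lambda>x. Collect (path_component ?G x)) ` ?G"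
      then obtain x where x: "x \<in> ?G" and S: "S = Collect (path_component ?G x)" by blast
      show "S \<in> {?Gp, ?Gm}"
      proof (cases "det (piof x) > 0")
        case True then show ?thesis unfolding S comp[OF x] by simp
      next
        case False then show ?thesis unfolding S comp[OF x] by simp
      qed
    qed
    have "?Gp \<in> (\<lambda>x. Collect (path_component ?G x)) ` ?G"
      by (rule image_eqI[where f="\<lambda>x. Collect (path_component ?G x)", OF c1[symmetric] w1])
    moreover have "?Gm \<in> (\<lambda>x. Collect (path_component ?G x)) ` ?G"
      by (rule image_eqI[where f="\<lambda>x. Collect (path_component ?G x)", OF c2[symmetric] w2])
    ultimately show "{?Gp, ?Gm} \<subseteq> (\<lambda>x. Collect (path_component ?G x)) ` ?G"
      by blast
  qed
  finally show ?thesis unfolding ep em .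
qed

end
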